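(* Let $P\in\mathbb{R}^{p\times m}$, $Y_d\in\mathbb{R}^p$, plant $Y_k=PU_k+N_k$, $E_k=Y_d-Y_k$, $\bar U_k=-\Delta U_k$, $D_k=-\Delta N_k$, so that the extended state $\bar X_k=\begin{bmatrix}E_k\\ D_k\end{bmatrix}\in\mathbb{R}^{2p}$ satisfies $\bar X_{k+1}=\bar A\bar X_k+\bar B\bar U_k+F^{\top}\Delta D_k$ and $E_k=\bar C\bar X_k$, where $\bar B=\begin{bmatrix}P\\0\end{bmatrix}$. Let $\bar L\in\mathbb{R}^{2p\times p}$, let $\hat{\bar X}_0\in\mathbb{R}^{2p}$ be arbitrary, and define the extended state observer (ESO) $\hat{\bar X}_{k+1}=\bar A\hat{\bar X}_k+\bar B\bar U_k+\bar L(E_k-\bar C\hat{\bar X}_k)$, $k\in\mathbb{Z}_+$, for an arbitrary input sequence $(\bar U_k)$. Then: (a) $\hat{\bar X}_{k+1}=(\bar A-\bar L\bar C)\hat{\bar X}_k+\bar B\bar U_k+\bar LE_k$ and the observation error $\tilde{\bar X}_k=\bar X_k-\hat{\bar X}_k$ satisfies $\tilde{\bar X}_{k+1}=(\bar A-\bar L\bar C)\tilde{\bar X}_k-F^{\top}\Delta^2N_k$ for all $k\in\mathbb{Z}_+$; (b) the observation error has the following two properties — (boundedness) there exist a class-$\mathcal{K}_\infty$ function $\chi_1$, a class-$\mathcal{KL}$ function $\zeta$ and a finite $\beta_0\ge0$ with $\|\tilde{\bar X}_k\|\le\chi_1(\beta_{\Delta^2N})+\zeta(\beta_0,k)$ for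 all $k$, and (superattractiveness) there is a class-$\mathcal{K}_\infty$ function $\chi_2$ with $\limsup_{k\to\infty}\|\tilde{\bar X}_k\|\le\chi_2(\beta^{ess}_{\Delta^2N})$ — for all bounded uncertainties and initial conditions if and only if $\rho(\bar A-\bar L\bar C)<1$; (c) there always exists a gain $\bar L\in\mathbb{R}^{2p\times p}$ with $\rho(\bar A-\bar L\bar C)<1$.
   Context: Notation: $\mathbb{Z}_+=\{0,1,2,\dots\}$. For a sequence $(f_k)$, $\Delta f_k=f_{k+1}-f_k$, $\Delta^2f_k=\Delta(\Delta f_k)$. $\|\cdot\|$ is a fixed vector norm, $\rho(\cdot)$ the spectral radius. $(N_k)\subset\mathbb{R}^p$ is an unknown bounded uncertainty sequence; $\beta_{\Delta^2N}=\sup_k\|\Delta^2N_k\|$, $\beta^{ess}_{\Delta^2N}=\limsup_{k\to\infty}\|\Delta^2N_k\|$. Matrices: $\bar A=\begin{bmatrix}I_p&I_p\\0&I_p\end{bmatrix}$, $\bar C=\begin{bmatrix}I_p&0\end{bmatrix}$, $F=\begin{bmatrix}0&I_p\end{bmatrix}$. *)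

theory Defs
  imports "Jordan_Normal_Form.Spectral_Radius" "HOL-Library.Extended_Real"
begin

definition vnorm :: "real vec \<Rightarrow> real" where
  "vnorm v = sqrt (\<Sum>i<dim_vec v. (v $ i)^2)"

definition rho :: "real mat \<Rightarrow> real" where
  "rho A = spectral_radius (map_mat complex_of_real A)"

definition dlt :: "(nat \<Rightarrow> real vec) \<Rightarrow> nat \<Rightarrow> real vec" where
  "dlt f k = f (Suc k) - f k"

text \<open>Abar = [[I,I],[0,I]], Cbar = [I 0], F = [0 I], Bbar = [P;0].\<close>
definition Abar :: "nat \<Rightarrow> real mat" where
  "Abar p = mat (2*p) (2*p) (\<lambda>(i,j). if i = j \<or> (i < p \<and> j = i + p) then 1 else 0)"

definition Cbar :: "nat \<Rightarrow> real mat" where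
  "Cbar p = mat p (2*p) (\<lambda>(i,j). if j = i then 1 else 0)"

definition Fmat :: "nat \<Rightarrow> real mat" where
  "Fmat p = mat p (2*p) (\<lambda>(i,j). if j = i + p then 1 else 0)"

definition Bbar :: "real mat \<Rightarrow> real mat" where
  "Bbar P = mat (2 * dim_row P) (dim_col P) (\<lambda>(i,j). if i < dim_row P then P $$ (i,j) else 0)"

definition Err :: "real mat \<Rightarrow> real vec \<Rightarrow> (nat \<Rightarrow> real vec) \<Rightarrow> (nat \<Rightarrow> real vec) \<Rightarrow> nat \<Rightarrow> real vec" where
  "Err P Yd U N k = Yd - (P *\<^sub>v U k + N k)"

definition Dist :: "(nat \<Rightarrow> real vec) \<Rightarrow> nat \<Rightarrow> real vec" where
  "Dist N k = - dlt N k"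

definition Ubar :: "(nat \<Rightarrow> real vec) \<Rightarrow> nat \<Rightarrow> real vec" where
  "Ubar U k = - dlt U k"

definition Xbar :: "real mat \<Rightarrow> real vec \<Rightarrow> (nat \<Rightarrow> real vec) \<Rightarrow> (nat \<Rightarrow> real vec) \<Rightarrow> nat \<Rightarrow> real vec" where
  "Xbar P Yd U N k = Err P Yd U N k @\<^sub>v Dist N k"

primrec eso :: "real mat \<Rightarrow> real vec \<Rightarrow> real mat \<Rightarrow> (nat \<Rightarrow> real vec) \<Rightarrow> (nat \<Rightarrow> real vec)
    \<Rightarrow> real vec \<Rightarrow> nat \<Rightarrow> real vec" where
  "eso P Yd L U N x0 0 = x0"
| "eso P Yd L U N x0 (Suc k) =
     Abar (dim_row P) *\<^sub>v eso P Yd L U N x0 k + Bbar P *\<^sub>v Ubar U k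
     + L *\<^sub>v (Err P Yd U N k - Cbar (dim_row P) *\<^sub>v eso P Yd L U N x0 k)"

definition Xtil where
  "Xtil P Yd L U N x0 k = Xbar P Yd U N k - eso P Yd L U N x0 k"

definition beta_d2N :: "(nat \<Rightarrow> real vec) \<Rightarrow> real" where
  "beta_d2N N = (SUP k. vnorm (dlt (dlt N) k))"

definition beta_ess_d2N :: "(nat \<Rightarrow> real vec) \<Rightarrow> real" where
  "beta_ess_d2N N = real_of_ereal (limsup (\<lambda>k. ereal (vnorm (dlt (dlt N) k))))"

definition class_K :: "(real \<Rightarrow> real) \<Rightarrow> bool" where
  "class_K f \<longleftrightarrow> continuous_on {0..} f \<and> f 0 = 0 \<and> strict_mono_on {0..} f"

definition class_Kinf :: "(real \<Rightarrow> real) \<Rightarrow> bool" where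
  "class_Kinf f \<longleftrightarrow> class_K f \<and> filterlim f at_top at_top"

definition class_KL :: "(real \<Rightarrow> nat \<Rightarrow> real) \<Rightarrow> bool" where
  "class_KL b \<longleftrightarrow> (\<forall>k. class_K (\<lambda>s. b s k)) \<and>
     (\<forall>s\<ge>0. antimono (\<lambda>k. b s k) \<and> (\<lambda>k. b s k) \<longlonglongrightarrow> 0)"

end

theory Submission imports Defs "HOL-Analysis.L2_Norm" begin


lemma Abar_carrier[simp]: "Abar p \<in> carrier_mat (2*p) (2*p)" by (simp add: Abar_def)
lemma Cbar_carrier[simp]: "Cbar p \<in> carrier_mat p (2*p)" by (simp add: Cbar_def)
lemma Fmat_carrier[simp]: "Fmat p \<in> carrier_mat p (2*p)" by (simp add: Fmat_def)
lemma Bbar_carrier: "P \<in> carrier_mat p m \<Longrightarrow> Bbar P \<in> carrier_mat (2*p) m" by (auto simp add: Bbar_def)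

lemma Abar_v_c[simp]: "v \<in> carrier_vec (2*p) \<Longrightarrow> Abar p *\<^sub>v v \<in> carrier_vec (2*p)"
  by (rule mult_mat_vec_carrier[OF Abar_carrier])
lemma FT_v_c[simp]: "(Fmat p)\<^sup>T *\<^sub>v v \<in> carrier_vec (2*p)"
proof -
  have "dim_col (Fmat p) = 2*p" by (simp add: Fmat_def)
  then show ?thesis unfolding carrier_vec_def by simp
qed

lemma Abar_four: "Abar p = four_block_mat (1\<^sub>m p) (1\<^sub>m p) (0\<^sub>m p p) (1\<^sub>m p)"
  by (rule eq_matI) (auto simp: Abar_def)

lemma Abar_mult: assumes "a \<in> carrier_vec p" "b \<in> carrier_vec p"
  shows "Abar p *\<^sub>v (a @\<^sub>v b) = (a + b) @\<^sub>v b"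
  unfolding Abar_four using assms by (subst four_block_mat_mult_vec[OF one_carrier_mat one_carrier_mat zero_carrier_mat one_carrier_mat]) auto

lemma sum_delta_mult: "finite A \<Longrightarrow> (\<Sum>j\<in>A. (if j = i then 1 else 0) * (f j :: real)) = (if i \<in> A then f i else 0)"
proof -
  assume "finite A"
  have "(\<Sum>j\<in>A. (if j = i then 1 else 0) * (f j :: real)) = (\<Sum>j\<in>A. if j = i then f j else 0)"
    by (rule sum.cong) auto
  then show ?thesis using \<open>finite A\<close> by (simp add: sum.delta')
qed

lemma Fmat_T_idx: assumes "d \<in> carrier_vec p" "i < 2*p"
  shows "((Fmat p)\<^sup>T *\<^sub>v d) $ i = (\<Sum>j<p. (if j + p = i then 1 else 0) * d $ j)"
proof -
  have "((Fmat p)\<^sup>T *\<^sub>v d) $ i = row ((Fmat p)\<^sup>T) i \<bullet> d" using assms by (simp add: Fmat_def)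
  also have "\<dots> = (\<Sum>j\<in>{0..<p}. (Fmat p) $$ (j,i) * d $ j)"
    using assms unfolding scalar_prod_def by (simp add: Fmat_def)
  also have "\<dots> = (\<Sum>j<p. (if j + p = i then 1 else 0) * d $ j)"
    using assms by (intro sum.cong) (auto simp: Fmat_def)
  finally show ?thesis .
qed

lemma Fmat_T: assumes "d \<in> carrier_vec p"
  shows "(Fmat p)\<^sup>T *\<^sub>v d = 0\<^sub>v p @\<^sub>v d"
proof (rule eq_vecI)
  fix i assume i: "i < dim_vec (0\<^sub>v p @\<^sub>v d)"
  then have i2: "i < 2*p" using assms by simp
  show "((Fmat p)\<^sup>T *\<^sub>v d) $ i = (0\<^sub>v p @\<^sub>v d) $ i"
  proof (cases "i < p")
    case True
    have "(\<Sum>j<p. (if j + p = i then 1 else 0) * d $ j) = (\<Sum>j<p. 0)"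
      by (rule sum.cong) (use True in auto)
    then show ?thesis using assms True unfolding Fmat_T_idx[OF assms i2] by simp
  next
    case False
    have "(\<Sum>j<p. (if j + p = i then 1 else 0) * d $ j) = (\<Sum>j<p. (if j = i - p then 1 else 0) * d $ j)"
      by (rule sum.cong) (use False in auto)
    also have "\<dots> = d $ (i - p)" using False i2 by (simp add: sum_delta_mult)
    finally show ?thesis using assms False i2 unfolding Fmat_T_idx[OF assms i2] by simp
  qed
next
  show "dim_vec ((Fmat p)\<^sup>T *\<^sub>v d) = dim_vec (0\<^sub>v p @\<^sub>v d)" using assms by (simp add: Fmat_def)
qed
lemma Cbar_mult: assumes "a \<in> carrier_vec p" "b \<in> carrier_vec p"
  shows "Cbar p *\<^sub>v (a @\<^sub>v b) = a"
  apply (rule eq_vecI) using assms by (auto simp: Cbar_def scalar_prod_def sum_delta_mult)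

lemma Bbar_mult: assumes "P \<in> carrier_mat p m" "u \<in> carrier_vec m"
  shows "Bbar P *\<^sub>v u = (P *\<^sub>v u) @\<^sub>v 0\<^sub>v p"
proof (rule eq_vecI)
  fix i assume i: "i < dim_vec ((P *\<^sub>v u) @\<^sub>v 0\<^sub>v p)"
  then have i2: "i < 2*p" using assms by simp
  have e: "(Bbar P *\<^sub>v u) $ i = (\<Sum>j\<in>{0..<m}. (if i < p then P $$ (i,j) else 0) * u $ j)"
    using assms i2 by (simp add: Bbar_def scalar_prod_def)
  show "(Bbar P *\<^sub>v u) $ i = ((P *\<^sub>v u) @\<^sub>v 0\<^sub>v p) $ i"
  proof (cases "i < p")
    case True
    then show ?thesis using assms unfolding e by (simp add: scalar_prod_def)
  next
    case False
    then show ?thesis using assms i2 unfolding e by simp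
  qed
next
  show "dim_vec (Bbar P *\<^sub>v u) = dim_vec ((P *\<^sub>v u) @\<^sub>v 0\<^sub>v p)" using assms by (simp add: Bbar_def)
qed

lemma append_vec_minus:
  assumes [simp]: "v : carrier_vec n" "v' : carrier_vec n"
      and [simp]: "w : carrier_vec m" "w' : carrier_vec m"
  shows "(v @\<^sub>v w) - (v' @\<^sub>v w') = (v - v') @\<^sub>v (w - w')" (is "?L = ?R")
proof
  have [simp]: "dim_vec v = n" "dim_vec v' = n" by auto
  have [simp]: "dim_vec w = m" "dim_vec w' = m" by auto
  fix i assume i: "i < dim_vec ?R"
  thus "?L $ i = ?R $ i" by (cases "i < n",auto)
qed auto

lemma vec_id1: "a \<in> carrier_vec n \<Longrightarrow> b \<in> carrier_vec n \<Longrightarrow> c \<in> carrier_vec n \<Longrightarrow> e \<in> carrier_vec n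
  \<Longrightarrow> a + b + (e - c) = (a - c) + b + (e :: real vec)"
  by (intro eq_vecI) auto

lemma vec_id2: "a \<in> carrier_vec n \<Longrightarrow> b \<in> carrier_vec n \<Longrightarrow> c \<in> carrier_vec n \<Longrightarrow> e \<in> carrier_vec n
  \<Longrightarrow> f \<in> carrier_vec n \<Longrightarrow> g \<in> carrier_vec n
  \<Longrightarrow> a + b - f - (c + b + (e - g)) = (a - e - (c - g)) - (f :: real vec)"
  by (intro eq_vecI) auto

locale sys =
  fixes p m :: nat and P L :: "real mat" and Yd :: "real vec" and U N :: "nat \<Rightarrow> real vec" and x0 :: "real vec"
  assumes P: "P \<in> carrier_mat p m" and Yd: "Yd \<in> carrier_vec p" and L: "L \<in> carrier_mat (2*p) p"
    and U: "\<And>k. U k \<in> carrier_vec m" and N: "\<And>k. N k \<in> carrier_vec p" and x0: "x0 \<in> carrier_vec (2*p)"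
begin

lemma rowP[simp]: "dim_row P = p" using P by auto

lemma Err_c[simp]: "Err P Yd U N k \<in> carrier_vec p"
  using P Yd U N by (simp add: Err_def)
lemma Dist_c[simp]: "Dist N k \<in> carrier_vec p"
  using N by (simp add: Dist_def dlt_def)
lemma Ubar_c[simp]: "Ubar U k \<in> carrier_vec m"
  using U by (simp add: Ubar_def dlt_def)
lemma d2_c[simp]: "dlt (dlt N) k \<in> carrier_vec p"
  using N by (simp add: dlt_def)
lemma Ubar_eq: "Ubar U k = U k - U (Suc k)"
  using U[of k] U[of "Suc k"] by (intro eq_vecI) (auto simp: Ubar_def dlt_def)

lemma Xbar_c[simp]: "Xbar P Yd U N k \<in> carrier_vec (2*p)"
  unfolding Xbar_def mult_2 by (rule append_carrier_vec) simp_all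
lemma eso_c[simp]: "eso P Yd L U N x0 k \<in> carrier_vec (2*p)"
proof (induction k)
  case 0 then show ?case using x0 by simp
next
  case (Suc k)
  have a: "Abar p *\<^sub>v eso P Yd L U N x0 k \<in> carrier_vec (2*p)"
    by (rule mult_mat_vec_carrier[OF Abar_carrier Suc.IH])
  have b: "Bbar P *\<^sub>v Ubar U k \<in> carrier_vec (2*p)"
    by (rule mult_mat_vec_carrier[OF Bbar_carrier[OF P] Ubar_c])
  have c: "Cbar p *\<^sub>v eso P Yd L U N x0 k \<in> carrier_vec p"
    by (rule mult_mat_vec_carrier[OF Cbar_carrier Suc.IH])
  have d: "L *\<^sub>v (Err P Yd U N k - Cbar p *\<^sub>v eso P Yd L U N x0 k) \<in> carrier_vec (2*p)"
    by (rule mult_mat_vec_carrier[OF L minus_carrier_vec[OF Err_c c]])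
  show ?case unfolding eso.simps rowP by (rule add_carrier_vec[OF add_carrier_vec[OF a b] d])
qed
lemma Xtil_c[simp]: "Xtil P Yd L U N x0 k \<in> carrier_vec (2*p)"
  by (simp add: Xtil_def)

lemma Xbar_step: "Xbar P Yd U N (Suc k) = Abar p *\<^sub>v Xbar P Yd U N k + Bbar P *\<^sub>v Ubar U k
    - (Fmat p)\<^sup>T *\<^sub>v dlt (dlt N) k"
proof -
  let ?E = "Err P Yd U N k" and ?D = "Dist N k" and ?d = "dlt (dlt N) k" and ?u = "P *\<^sub>v Ubar U k"
  have u: "?u \<in> carrier_vec p" using P by simp
  have dd: "dim_vec ?d = p" "dim_vec ?E = p" "dim_vec ?D = p" "dim_vec ?u = p" using u by auto
  have "Abar p *\<^sub>v Xbar P Yd U N k + Bbar P *\<^sub>v Ubar U k - (Fmat p)\<^sup>T *\<^sub>v ?d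
    = ((?E + ?D) @\<^sub>v ?D) + (?u @\<^sub>v 0\<^sub>v p) - (0\<^sub>v p @\<^sub>v ?d)"
    unfolding Xbar_def Abar_mult[OF Err_c Dist_c] Bbar_mult[OF P Ubar_c] Fmat_T[OF d2_c] ..
  also have "\<dots> = (?E + ?D + ?u) @\<^sub>v (?D - ?d)"
    using u by (simp add: append_vec_add[of _ p _ _ p] append_vec_minus[of _ p _ _ p])
  also have "?E + ?D + ?u = Err P Yd U N (Suc k)"
    unfolding Ubar_eq mult_minus_distrib_mat_vec[OF P U U]
    using P U[of k] U[of "Suc k"] N[of k] N[of "Suc k"] Yd
    by (intro eq_vecI) (simp_all add: Err_def Dist_def dlt_def)
  also have "?D - ?d = Dist N (Suc k)"
    using N[of k] N[of "Suc k"] N[of "Suc (Suc k)"] by (intro eq_vecI) (simp_all add: Dist_def dlt_def)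
  finally show ?thesis by (simp add: Xbar_def)
qed

lemma Err_C: "Err P Yd U N k = Cbar p *\<^sub>v Xbar P Yd U N k"
  by (simp add: Xbar_def Cbar_mult)

lemma LC_c[simp]: "L * Cbar p \<in> carrier_mat (2*p) (2*p)" using L by simp

lemma Cx_c[simp]: "Cbar p *\<^sub>v eso P Yd L U N x0 k \<in> carrier_vec p"
  by (rule mult_mat_vec_carrier[OF Cbar_carrier eso_c])
lemma CX_c[simp]: "Cbar p *\<^sub>v Xbar P Yd U N k \<in> carrier_vec p"
  by (rule mult_mat_vec_carrier[OF Cbar_carrier Xbar_c])

lemma M_c[simp]: "Abar p - L * Cbar p \<in> carrier_mat (2*p) (2*p)"
  by (rule minus_carrier_mat[OF LC_c])

lemma eso_step: "eso P Yd L U N x0 (Suc k) =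
  (Abar p - L * Cbar p) *\<^sub>v eso P Yd L U N x0 k + Bbar P *\<^sub>v Ubar U k + L *\<^sub>v Err P Yd U N k"
proof -
  let ?x = "eso P Yd L U N x0 k"
  have "(Abar p - L * Cbar p) *\<^sub>v ?x = Abar p *\<^sub>v ?x - L *\<^sub>v (Cbar p *\<^sub>v ?x)"
    using L by (simp add: minus_mult_distrib_mat_vec[of _ "2*p" "2*p"] assoc_mult_mat_vec[OF L Cbar_carrier eso_c])
  moreover have "L *\<^sub>v (Err P Yd U N k - Cbar p *\<^sub>v ?x) = L *\<^sub>v Err P Yd U N k - L *\<^sub>v (Cbar p *\<^sub>v ?x)"
    by (rule mult_minus_distrib_mat_vec[OF L]) simp_all
  ultimately show ?thesis
    using L Bbar_carrier[OF P] by (simp only: eso.simps rowP, intro vec_id1[of _ "2*p"]) simp_all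
qed

lemma Xtil_step: "Xtil P Yd L U N x0 (Suc k) =
  (Abar p - L * Cbar p) *\<^sub>v Xtil P Yd L U N x0 k - (Fmat p)\<^sup>T *\<^sub>v dlt (dlt N) k"
proof -
  let ?x = "eso P Yd L U N x0 k" and ?X = "Xbar P Yd U N k"
  have "(Abar p - L * Cbar p) *\<^sub>v (?X - ?x) = (Abar p - L * Cbar p) *\<^sub>v ?X - (Abar p - L * Cbar p) *\<^sub>v ?x"
    by (rule mult_minus_distrib_mat_vec[of _ "2*p" "2*p"]) (use L in simp_all)
  also have "\<dots> = (Abar p *\<^sub>v ?X - L *\<^sub>v (Cbar p *\<^sub>v ?X)) - (Abar p *\<^sub>v ?x - L *\<^sub>v (Cbar p *\<^sub>v ?x))"
    using L by (simp add: minus_mult_distrib_mat_vec[of _ "2*p" "2*p"] assoc_mult_mat_vec[OF L Cbar_carrier eso_c]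
       assoc_mult_mat_vec[OF L Cbar_carrier Xbar_c])
  finally have 1: "(Abar p - L * Cbar p) *\<^sub>v (?X - ?x) = (Abar p *\<^sub>v ?X - L *\<^sub>v (Cbar p *\<^sub>v ?X)) - (Abar p *\<^sub>v ?x - L *\<^sub>v (Cbar p *\<^sub>v ?x))" .
  have 2: "L *\<^sub>v (Err P Yd U N k - Cbar p *\<^sub>v ?x) = L *\<^sub>v (Cbar p *\<^sub>v ?X) - L *\<^sub>v (Cbar p *\<^sub>v ?x)"
    unfolding Err_C by (rule mult_minus_distrib_mat_vec[OF L]) simp_all
  show ?thesis unfolding Xtil_def Xbar_step eso.simps rowP 1 2
    using L Bbar_carrier[OF P] by (intro vec_id2[of _ "2*p"]) simp_all
qed

end



lemma vnorm_L2: "vnorm v = L2_set (\<lambda>i. v $ i) {..<dim_vec v}"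
  by (simp add: vnorm_def L2_set_def)

lemma vnorm_nonneg[simp]: "0 \<le> vnorm v"
  by (simp add: vnorm_L2)

lemma vnorm_add: assumes "dim_vec a = dim_vec b" shows "vnorm (a + b) \<le> vnorm a + vnorm b"
proof -
  have "vnorm (a + b) = L2_set (\<lambda>i. a $ i + b $ i) {..<dim_vec b}"
    unfolding vnorm_L2 by (rule L2_set_cong) (use assms in auto)
  also have "\<dots> \<le> vnorm a + vnorm b" unfolding vnorm_L2 using assms by (simp add: L2_set_triangle_ineq)
  finally show ?thesis .
qed

lemma vnorm_uminus[simp]: "vnorm (- a) = vnorm a"
  unfolding vnorm_def by simp

lemma vnorm_minus: assumes "dim_vec a = dim_vec b" shows "vnorm (a - b) \<le> vnorm a + vnorm b"
proof -
  have "vnorm (a - b) = L2_set (\<lambda>i. a $ i + (- b $ i)) {..<dim_vec b}"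
    unfolding vnorm_L2 by (rule L2_set_cong) (use assms in auto)
  also have "\<dots> \<le> L2_set (\<lambda>i. a $ i) {..<dim_vec b} + L2_set (\<lambda>i. - b $ i) {..<dim_vec b}"
    by (rule L2_set_triangle_ineq)
  also have "L2_set (\<lambda>i. - b $ i) {..<dim_vec b} = vnorm b" unfolding vnorm_L2 L2_set_def by simp
  finally show ?thesis using assms by (simp add: vnorm_L2)
qed

lemma vnorm_comp: assumes "i < dim_vec v" shows "\<bar>v $ i\<bar> \<le> vnorm v"
proof -
  have "\<bar>v $ i\<bar> \<le> L2_set (\<lambda>i. \<bar>v $ i\<bar>) {..<dim_vec v}"
    by (rule member_le_L2_set) (use assms in auto)
  also have "\<dots> = vnorm v" unfolding vnorm_L2 L2_set_def by simp
  finally show ?thesis .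
qed

lemma vnorm_le_bound: fixes c :: real assumes "\<And>i. i < dim_vec v \<Longrightarrow> \<bar>v $ i\<bar> \<le> c" shows "vnorm v \<le> dim_vec v * c"
proof -
  have "vnorm v \<le> (\<Sum>i<dim_vec v. \<bar>v $ i\<bar>)" unfolding vnorm_L2 by (rule L2_set_le_sum_abs)
  also have "\<dots> \<le> (\<Sum>i<dim_vec v. c)" by (rule sum_mono) (use assms in auto)
  finally show ?thesis by simp
qed

lemma vnorm_zero[simp]: "vnorm (0\<^sub>v n) = 0"
  unfolding vnorm_def by simp

lemma vnorm_mat: assumes A: "A \<in> carrier_mat n n" and x: "x \<in> carrier_vec n"
  and c: "\<And>i j. i < n \<Longrightarrow> j < n \<Longrightarrow> \<bar>A $$ (i,j)\<bar> \<le> c"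
  shows "vnorm (A *\<^sub>v x) \<le> (real n * real n * c) * vnorm x"
proof -
  have "\<bar>(A *\<^sub>v x) $ i\<bar> \<le> real n * c * vnorm x" if i: "i < dim_vec (A *\<^sub>v x)" for i
  proof -
    have i': "i < n" using i A by simp
    have "(A *\<^sub>v x) $ i = (\<Sum>j\<in>{0..<n}. A $$ (i,j) * x $ j)"
      using A x i' by (simp add: scalar_prod_def)
    also have "\<bar>\<dots>\<bar> \<le> (\<Sum>j\<in>{0..<n}. \<bar>A $$ (i,j) * x $ j\<bar>)" by (rule sum_abs)
    also have "\<dots> \<le> (\<Sum>j\<in>{0..<n}. c * vnorm x)"
    proof (rule sum_mono)
      fix j assume j: "j \<in> {0..<n}"
      have "\<bar>A $$ (i,j) * x $ j\<bar> = \<bar>A $$ (i,j)\<bar> * \<bar>x $ j\<bar>" by (simp add: abs_mult)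
      also have "\<dots> \<le> c * vnorm x"
        by (rule mult_mono) (use c[OF i', of j] abs_ge_zero[of "A $$ (i,j)"] j x vnorm_comp[of j x] in auto)
      finally show "\<bar>A $$ (i,j) * x $ j\<bar> \<le> c * vnorm x" .
    qed
    finally show ?thesis by simp
  qed
  then have "vnorm (A *\<^sub>v x) \<le> dim_vec (A *\<^sub>v x) * (real n * c * vnorm x)" by (rule vnorm_le_bound)
  then show ?thesis using A by (simp add: mult.assoc)
qed

lemma smult_mat_vec: "A \<in> carrier_mat nr nc \<Longrightarrow> v \<in> carrier_vec nc \<Longrightarrow> (a ::'a::comm_ring_1) \<cdot>\<^sub>m A *\<^sub>v v = a \<cdot>\<^sub>v (A *\<^sub>v v)"
  by (intro eq_vecI) (auto simp: scalar_prod_def sum_distrib_left mult.assoc intro!: sum.cong)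

lemma smult_smult_mat: "(a ::'a::comm_ring_1) \<cdot>\<^sub>m (b \<cdot>\<^sub>m A) = (a * b) \<cdot>\<^sub>m A"
  by (intro eq_matI) (auto simp: mult.assoc)

lemma smult_pow_mat: assumes A: "A \<in> carrier_mat n n"
  shows "((a ::'a::comm_ring_1) \<cdot>\<^sub>m A) ^\<^sub>m k = (a ^ k) \<cdot>\<^sub>m (A ^\<^sub>m k)"
proof (induction k)
  case 0
  then show ?case using A by (intro eq_matI) auto
next
  case (Suc k)
  have "(a \<cdot>\<^sub>m A) ^\<^sub>m Suc k = (a ^ k \<cdot>\<^sub>m A ^\<^sub>m k) * (a \<cdot>\<^sub>m A)" using Suc by simp
  also have "\<dots> = a ^ k \<cdot>\<^sub>m (A ^\<^sub>m k * (a \<cdot>\<^sub>m A))"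
    by (rule mult_smult_assoc_mat[of _ n n]) (use A in auto)
  also have "A ^\<^sub>m k * (a \<cdot>\<^sub>m A) = a \<cdot>\<^sub>m (A ^\<^sub>m k * A)"
    by (rule mult_smult_distrib[of _ n n]) (use A in auto)
  finally show ?case by (simp add: smult_smult_mat mult.commute)
qed

lemma pow_bound:
  fixes M :: "real mat"
  assumes M: "M \<in> carrier_mat n n" and n: "0 < n" and r: "rho M < 1"
  shows "\<exists>c \<mu>. 0 < \<mu> \<and> \<mu> < 1 \<and> 0 < c \<and> (\<forall>k i j. i < n \<longrightarrow> j < n \<longrightarrow> \<bar>(M ^\<^sub>m k) $$ (i,j)\<bar> \<le> c * \<mu>^k)"
proof -
  define Mc where "Mc = map_mat complex_of_real M"
  have Mc: "Mc \<in> carrier_mat n n" using M by (simp add: Mc_def)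
  define \<rho> where "\<rho> = spectral_radius Mc"
  have \<rho>1: "\<rho> < 1" using r by (simp add: rho_def \<rho>_def Mc_def)
  have \<rho>0: "0 \<le> \<rho>" using spectral_radius_mem_max(1)[OF Mc n] by (auto simp: \<rho>_def)
  define \<mu> where "\<mu> = (\<rho> + 1)/2"
  have \<mu>: "0 < \<mu>" "\<mu> < 1" "\<rho> < \<mu>" using \<rho>0 \<rho>1 by (auto simp: \<mu>_def)
  define A where "A = complex_of_real (1/\<mu>) \<cdot>\<^sub>m Mc"
  have A: "A \<in> carrier_mat n n" using Mc by (simp add: A_def)
  have srA: "spectral_radius A < 1"
  proof -
    from spectral_radius_mem_max(1)[OF A n] obtain ev where ev: "ev \<in> spectrum A" "spectral_radius A = norm ev" by auto
    from ev(1) obtain v where v: "eigenvector A v ev" unfolding spectrum_def eigenvalue_def by auto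
    have vc: "v \<in> carrier_vec n" "v \<noteq> 0\<^sub>v n" "A *\<^sub>v v = ev \<cdot>\<^sub>v v" using v A unfolding eigenvector_def by auto
    have "Mc *\<^sub>v v = complex_of_real \<mu> \<cdot>\<^sub>v (A *\<^sub>v v)"
      unfolding A_def smult_mat_vec[OF Mc vc(1)] smult_smult_assoc using \<mu>(1) by (simp flip: of_real_mult)
    also have "\<dots> = (complex_of_real \<mu> * ev) \<cdot>\<^sub>v v" unfolding vc(3) smult_smult_assoc ..
    finally have "eigenvector Mc v (complex_of_real \<mu> * ev)" using vc Mc unfolding eigenvector_def by auto
    then have "complex_of_real \<mu> * ev \<in> spectrum Mc" unfolding spectrum_def eigenvalue_def by auto
    then have "norm (complex_of_real \<mu> * ev) \<le> \<rho>" unfolding \<rho>_def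
      by (intro spectral_radius_mem_max(2)[OF Mc n]) auto
    then have "\<mu> * norm ev \<le> \<rho>" using \<mu>(1) by (simp add: norm_mult)
    then have "\<mu> * norm ev < \<mu>" using \<mu>(3) by linarith
    then have "norm ev < 1" using \<mu>(1) by (metis mult.right_neutral mult_less_cancel_left_pos)
    then show ?thesis using ev(2) by simp
  qed
  from spectral_radius_jnf_norm_bound_less_1_upper_triangular[OF A srA]
  obtain c where c: "\<And>k. norm_bound (A ^\<^sub>m k) c" by auto
  define c' where "c' = max c 1"
  have "\<bar>(M ^\<^sub>m k) $$ (i,j)\<bar> \<le> c' * \<mu>^k" if ij: "i < n" "j < n" for k i j
  proof -
    have "Mc ^\<^sub>m k = map_mat complex_of_real (M ^\<^sub>m k)" unfolding Mc_def
      by (rule of_real_hom.mat_hom_pow[OF M, symmetric])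
    then have e1: "complex_of_real ((M ^\<^sub>m k) $$ (i,j)) = (Mc ^\<^sub>m k) $$ (i,j)" using ij M by simp
    have "Mc = complex_of_real \<mu> \<cdot>\<^sub>m A" unfolding A_def smult_smult_mat using \<mu>(1)
      by (intro eq_matI) (auto simp flip: of_real_mult)
    then have "Mc ^\<^sub>m k = complex_of_real \<mu> ^ k \<cdot>\<^sub>m (A ^\<^sub>m k)" using smult_pow_mat[OF A] by simp
    then have e2: "(Mc ^\<^sub>m k) $$ (i,j) = complex_of_real \<mu> ^ k * (A ^\<^sub>m k) $$ (i,j)" using ij A by simp
    have "norm ((A ^\<^sub>m k) $$ (i,j)) \<le> c" using c[of k] ij A unfolding norm_bound_def by auto
    have "\<bar>(M ^\<^sub>m k) $$ (i,j)\<bar> = norm (complex_of_real ((M ^\<^sub>m k) $$ (i,j)))" by simp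
    also have "\<dots> = \<mu>^k * norm ((A ^\<^sub>m k) $$ (i,j))" unfolding e1 e2 using \<mu>(1) by (simp add: norm_mult norm_power)
    also have "\<dots> \<le> \<mu>^k * c'" 
      using \<open>norm ((A ^\<^sub>m k) $$ (i,j)) \<le> c\<close> \<mu>(1) unfolding c'_def
      by (intro mult_left_mono) auto
    finally show ?thesis by (simp add: mult.commute)
  qed
  moreover have "0 < c'" unfolding c'_def by simp
  ultimately show ?thesis using \<mu> by blast
qed

lemma rho_lt1_of_decay:
  fixes M :: "real mat"
  assumes M: "M \<in> carrier_mat n n" and n: "0 < n"
    and dec: "\<And>a. a \<in> carrier_vec n \<Longrightarrow> (\<lambda>k. vnorm (M ^\<^sub>m k *\<^sub>v a)) \<longlonglongrightarrow> 0"
  shows "rho M < 1"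
proof (rule ccontr)
  assume "\<not> rho M < 1"
  define Mc where "Mc = map_mat complex_of_real M"
  have Mc: "Mc \<in> carrier_mat n n" using M by (simp add: Mc_def)
  have r1: "1 \<le> spectral_radius Mc" using \<open>\<not> rho M < 1\<close> by (simp add: rho_def Mc_def)
  from spectral_radius_mem_max(1)[OF Mc n] obtain ev where ev: "ev \<in> spectrum Mc" "spectral_radius Mc = norm ev" by auto
  from ev(1) obtain v where v: "eigenvector Mc v ev" unfolding spectrum_def eigenvalue_def by auto
  have vc: "v \<in> carrier_vec n" "v \<noteq> 0\<^sub>v n" using v Mc unfolding eigenvector_def by auto
  obtain j where j: "j < n" "v $ j \<noteq> 0"
    using vc by (metis carrier_vecD eq_vecI index_zero_vec(1) index_zero_vec(2))
  define a where "a = vec n (\<lambda>i. Re (v $ i))"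
  define b where "b = vec n (\<lambda>i. Im (v $ i))"
  have ab: "a \<in> carrier_vec n" "b \<in> carrier_vec n" by (auto simp: a_def b_def)
  have bound: "norm (v $ j) \<le> vnorm (M ^\<^sub>m k *\<^sub>v a) + vnorm (M ^\<^sub>m k *\<^sub>v b)" for k
  proof -
    have pw: "Mc ^\<^sub>m k = map_mat complex_of_real (M ^\<^sub>m k)" unfolding Mc_def
      by (rule of_real_hom.mat_hom_pow[OF M, symmetric])
    define S where "S = (\<Sum>l\<in>{0..<n}. complex_of_real ((M ^\<^sub>m k) $$ (j,l)) * v $ l)"
    have e1: "(Mc ^\<^sub>m k *\<^sub>v v) $ j = S"
      unfolding S_def pw using M vc j by (simp add: scalar_prod_def)
    have e2: "(Mc ^\<^sub>m k *\<^sub>v v) $ j = ev ^ k * v $ j"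
      using eigenvector_pow[OF Mc v, of k] vc j by simp
    have ra: "(M ^\<^sub>m k *\<^sub>v a) $ j = Re S"
      unfolding S_def using M j by (simp add: scalar_prod_def a_def)
    have rb: "(M ^\<^sub>m k *\<^sub>v b) $ j = Im S"
      unfolding S_def using M j by (simp add: scalar_prod_def b_def)
    have "norm (v $ j) \<le> norm ev ^ k * norm (v $ j)"
    proof -
      have "1 \<le> norm ev ^ k" using r1 ev(2) by (intro one_le_power) auto
      then have "1 * norm (v $ j) \<le> norm ev ^ k * norm (v $ j)" by (intro mult_right_mono) auto
      then show ?thesis by simp
    qed
    also have "\<dots> = norm S" unfolding e1[symmetric] e2 by (simp add: norm_mult norm_power)
    also have "\<dots> \<le> \<bar>Re S\<bar> + \<bar>Im S\<bar>" by (rule cmod_le)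
    also have "\<dots> \<le> vnorm (M ^\<^sub>m k *\<^sub>v a) + vnorm (M ^\<^sub>m k *\<^sub>v b)"
      unfolding ra[symmetric] rb[symmetric] using M j
      by (intro add_mono vnorm_comp) auto
    finally show ?thesis .
  qed
  have lim: "(\<lambda>k. vnorm (M ^\<^sub>m k *\<^sub>v a) + vnorm (M ^\<^sub>m k *\<^sub>v b)) \<longlonglongrightarrow> 0"
    using tendsto_add_zero[OF dec[OF ab(1)] dec[OF ab(2)]] .
  have "norm (v $ j) \<le> 0" by (rule LIMSEQ_le_const[OF lim]) (use bound in auto)
  then show False using j by simp
qed

lemma pow_Suc_left: assumes M: "M \<in> carrier_mat n n" shows "M ^\<^sub>m Suc k = M * M ^\<^sub>m k"
proof (induction k)
  case 0 then show ?case using M by simp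
next
  case (Suc k)
  have "M ^\<^sub>m Suc (Suc k) = (M * M ^\<^sub>m k) * M" using Suc by simp
  also have "\<dots> = M * (M ^\<^sub>m k * M)" by (rule assoc_mult_mat[of _ n n _ n _ n]) (use M in auto)
  finally show ?case by simp
qed

lemma pow_mult_vec_Suc: assumes M: "M \<in> carrier_mat n n" and x: "x \<in> carrier_vec n"
  shows "M ^\<^sub>m Suc k *\<^sub>v x = M *\<^sub>v (M ^\<^sub>m k *\<^sub>v x)"
  unfolding pow_Suc_left[OF M] using M x by (simp add: assoc_mult_mat_vec[of _ n n _ n])

lemma geo_le: fixes \<mu> :: real assumes "0 \<le> \<mu>" "\<mu> < 1" shows "(\<Sum>i<k. \<mu> ^ i) \<le> 1 / (1 - \<mu>)"
proof -
  have "(\<Sum>i<k. \<mu> ^ i) = (\<mu> ^ k - 1) / (\<mu> - 1)" using assms by (intro geometric_sum) auto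
  also have "\<dots> = (1 - \<mu> ^ k) / (1 - \<mu>)" by (metis minus_diff_eq minus_divide_divide)
  also have "\<dots> \<le> 1 / (1 - \<mu>)" using assms by (intro divide_right_mono) auto
  finally show ?thesis .
qed

lemma mv_add3: assumes M: "M \<in> carrier_mat n n" and a: "a \<in> carrier_vec n" and b: "b \<in> carrier_vec n"
  and c: "c \<in> carrier_vec n"
  shows "M *\<^sub>v (a + b) + c = M *\<^sub>v a + (M *\<^sub>v b + c)"
proof -
  have "M *\<^sub>v (a + b) = M *\<^sub>v a + M *\<^sub>v b" by (rule mult_add_distrib_mat_vec[OF M a b])
  then show ?thesis using M a b c by (intro eq_vecI) (auto simp: add.assoc)
qed

primrec fz :: "real mat \<Rightarrow> (nat \<Rightarrow> real vec) \<Rightarrow> nat \<Rightarrow> nat \<Rightarrow> real vec" where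
  "fz M w k0 0 = 0\<^sub>v (dim_row M)"
| "fz M w k0 (Suc k) = M *\<^sub>v fz M w k0 k + w (k0 + k)"

lemma forced_bound:
  fixes M :: "real mat" and X w :: "nat \<Rightarrow> real vec"
  assumes M: "M \<in> carrier_mat n n"
  and Xc: "\<And>k. X k \<in> carrier_vec n" and wc: "\<And>k. w k \<in> carrier_vec n"
  and step: "\<And>k. X (Suc k) = M *\<^sub>v X k + w k"
  and pb: "\<And>k x. x \<in> carrier_vec n \<Longrightarrow> vnorm (M ^\<^sub>m k *\<^sub>v x) \<le> K * \<mu>^k * vnorm x"
  and \<mu>: "0 < \<mu>" "\<mu> < 1" and K: "0 \<le> K"
  and b: "\<And>j. j \<ge> k0 \<Longrightarrow> vnorm (w j) \<le> b"
  shows "vnorm (X (k0 + k)) \<le> K * \<mu>^k * vnorm (X k0) + K * b / (1 - \<mu>)"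
proof -
  have zc: "fz M w k1 k \<in> carrier_vec n" for k1 k
    by (induction k) (use M wc in auto)
  have z2: "X (k0 + k) = M ^\<^sub>m k *\<^sub>v X k0 + fz M w k0 k" for k
  proof (induction k)
    case 0 then show ?case using M Xc[of k0] by simp
  next
    case (Suc k)
    have "X (k0 + Suc k) = M *\<^sub>v (M ^\<^sub>m k *\<^sub>v X k0 + fz M w k0 k) + w (k0 + k)"
      using step[of "k0 + k"] Suc by simp
    also have "\<dots> = M ^\<^sub>m Suc k *\<^sub>v X k0 + fz M w k0 (Suc k)"
      unfolding pow_mult_vec_Suc[OF M Xc] fz.simps
      using M Xc[of k0] zc[of k0 k] wc[of "k0+k"] mult_mat_vec_carrier[OF pow_carrier_mat[OF M] Xc, of k k0]
      by (intro mv_add3) auto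
    finally show ?case .
  qed
  have z3: "fz M w k1 (Suc k) = M ^\<^sub>m k *\<^sub>v w k1 + fz M w (Suc k1) k" for k k1
  proof (induction k arbitrary: k1)
    case 0 then show ?case using M wc[of k1] by (intro eq_vecI) auto
  next
    case (Suc k)
    have "fz M w k1 (Suc (Suc k)) = M *\<^sub>v (M ^\<^sub>m k *\<^sub>v w k1 + fz M w (Suc k1) k) + w (k1 + Suc k)"
      using Suc[of k1] by simp
    also have "\<dots> = M *\<^sub>v (M ^\<^sub>m k *\<^sub>v w k1 + fz M w (Suc k1) k) + w (Suc k1 + k)" by simp
    also have "\<dots> = M ^\<^sub>m Suc k *\<^sub>v w k1 + fz M w (Suc k1) (Suc k)"
      unfolding pow_mult_vec_Suc[OF M wc] fz.simps
      using M wc[of k1] zc[of "Suc k1" k] wc[of "Suc k1 + k"] mult_mat_vec_carrier[OF pow_carrier_mat[OF M] wc, of k k1]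
      by (intro mv_add3) auto
    finally show ?case .
  qed
  have z4: "k1 \<ge> k0 \<Longrightarrow> vnorm (fz M w k1 k) \<le> K * b * (\<Sum>i<k. \<mu>^i)" for k k1
  proof (induction k arbitrary: k1)
    case 0 then show ?case using M by simp
  next
    case (Suc k)
    have "vnorm (fz M w k1 (Suc k)) \<le> vnorm (M ^\<^sub>m k *\<^sub>v w k1) + vnorm (fz M w (Suc k1) k)"
      unfolding z3 by (rule vnorm_add) (use M zc[of "Suc k1" k] in auto)
    also have "\<dots> \<le> K * \<mu>^k * b + K * b * (\<Sum>i<k. \<mu>^i)"
    proof (rule add_mono)
      show "vnorm (M ^\<^sub>m k *\<^sub>v w k1) \<le> K * \<mu>^k * b"
        using pb[OF wc[of k1], of k] b[of k1] Suc.prems K \<mu>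
        by (meson order_trans mult_left_mono mult_nonneg_nonneg zero_le_power less_imp_le)
      show "vnorm (fz M w (Suc k1) k) \<le> K * b * (\<Sum>i<k. \<mu>^i)" using Suc.IH[of "Suc k1"] Suc.prems by simp
    qed
    also have "\<dots> = K * b * (\<Sum>i<Suc k. \<mu>^i)" by (simp add: algebra_simps)
    finally show ?case .
  qed
  have b0: "0 \<le> b" using b[of k0] vnorm_nonneg[of "w k0"] by linarith
  have "vnorm (X (k0 + k)) \<le> vnorm (M ^\<^sub>m k *\<^sub>v X k0) + vnorm (fz M w k0 k)"
    unfolding z2 by (rule vnorm_add) (use M zc[of k0 k] in auto)
  also have "\<dots> \<le> K * \<mu>^k * vnorm (X k0) + K * b / (1 - \<mu>)"
  proof (rule add_mono)
    show "vnorm (M ^\<^sub>m k *\<^sub>v X k0) \<le> K * \<mu> ^ k * vnorm (X k0)" by (rule pb[OF Xc])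
    have "vnorm (fz M w k0 k) \<le> K * b * (\<Sum>i<k. \<mu>^i)" by (rule z4) simp
    also have "\<dots> \<le> K * b * (1 / (1 - \<mu>))"
      using geo_le[of \<mu> k] \<mu> K b0 by (intro mult_left_mono) auto
    finally show "vnorm (fz M w k0 k) \<le> K * b / (1 - \<mu>)" by simp
  qed
  finally show ?thesis .
qed


definition Lgain :: "nat \<Rightarrow> real mat" where
  "Lgain p = mat (2*p) p (\<lambda>(i,j). if i = j then 2 else if i = j + p then 1 else 0)"

lemma Lgain_carrier[simp]: "Lgain p \<in> carrier_mat (2*p) p" by (simp add: Lgain_def)

lemma Lgain_mult: assumes a: "a \<in> carrier_vec p" shows "Lgain p *\<^sub>v a = (2 \<cdot>\<^sub>v a) @\<^sub>v a"
proof (rule eq_vecI)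
  fix i assume "i < dim_vec ((2 \<cdot>\<^sub>v a) @\<^sub>v a)"
  then have i: "i < 2*p" using a by simp
  have e: "(Lgain p *\<^sub>v a) $ i = (\<Sum>j\<in>{0..<p}. (if i = j then 2 else if i = j + p then 1 else 0) * a $ j)"
    using a i by (simp add: Lgain_def scalar_prod_def)
  show "(Lgain p *\<^sub>v a) $ i = ((2 \<cdot>\<^sub>v a) @\<^sub>v a) $ i"
  proof (cases "i < p")
    case True
    have "(\<Sum>j\<in>{0..<p}. (if i = j then 2 else if i = j + p then 1 else 0) * a $ j)
        = (\<Sum>j\<in>{0..<p}. (if j = i then 1 else 0) * (2 * a $ j))"
      by (rule sum.cong) (use True in auto)
    also have "\<dots> = 2 * a $ i" using True by (simp add: sum_delta_mult)
    finally show ?thesis unfolding e using True a by simp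
  next
    case False
    have "(\<Sum>j\<in>{0..<p}. (if i = j then 2 else if i = j + p then 1 else 0) * a $ j)
        = (\<Sum>j\<in>{0..<p}. (if j = i - p then 1 else 0) * a $ j)"
      by (rule sum.cong) (use False in auto)
    also have "\<dots> = a $ (i - p)" using False i by (simp add: sum_delta_mult)
    finally show ?thesis unfolding e using False a i by simp
  qed
qed (use a in \<open>simp add: Lgain_def\<close>)

lemma Mgain_mult: assumes a: "a \<in> carrier_vec p" and b: "b \<in> carrier_vec p"
  shows "(Abar p - Lgain p * Cbar p) *\<^sub>v (a @\<^sub>v b) = (b - a) @\<^sub>v (b - a)"
proof -
  have ab: "a @\<^sub>v b \<in> carrier_vec (2*p)" using a b by (simp add: mult_2)
  have "(Abar p - Lgain p * Cbar p) *\<^sub>v (a @\<^sub>v b) = Abar p *\<^sub>v (a @\<^sub>v b) - Lgain p *\<^sub>v (Cbar p *\<^sub>v (a @\<^sub>v b))"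
    unfolding minus_mult_distrib_mat_vec[OF Abar_carrier mult_carrier_mat[OF Lgain_carrier Cbar_carrier] ab]
      assoc_mult_mat_vec[OF Lgain_carrier Cbar_carrier ab] ..
  also have "\<dots> = ((a + b) @\<^sub>v b) - ((2 \<cdot>\<^sub>v a) @\<^sub>v a)"
    unfolding Abar_mult[OF a b] Cbar_mult[OF a b] Lgain_mult[OF a] ..
  also have "\<dots> = (a + b - 2 \<cdot>\<^sub>v a) @\<^sub>v (b - a)"
    by (rule append_vec_minus[of _ p _ _ p]) (use a b in auto)
  also have "a + b - 2 \<cdot>\<^sub>v a = b - a" using a b by (intro eq_vecI) auto
  finally show ?thesis .
qed

lemma Mgain_sq: assumes x: "x \<in> carrier_vec (2*p)"
  shows "(Abar p - Lgain p * Cbar p) *\<^sub>v ((Abar p - Lgain p * Cbar p) *\<^sub>v x) = 0\<^sub>v (2*p)"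
proof -
  let ?M = "Abar p - Lgain p * Cbar p"
  have x': "x \<in> carrier_vec (p + p)" using x by (simp add: mult_2)
  define a where "a = vec_first x p"
  define b where "b = vec_last x p"
  have xe: "x = a @\<^sub>v b" unfolding a_def b_def using vec_first_last_append[OF x'] by simp
  have ac: "a \<in> carrier_vec p" "b \<in> carrier_vec p" by (auto simp: a_def b_def)
  have "?M *\<^sub>v x = (b - a) @\<^sub>v (b - a)" unfolding xe by (rule Mgain_mult[OF ac])
  moreover have "?M *\<^sub>v ((b - a) @\<^sub>v (b - a)) = ((b - a) - (b - a)) @\<^sub>v ((b - a) - (b - a))"
    by (rule Mgain_mult) (use ac in auto)
  ultimately have "?M *\<^sub>v (?M *\<^sub>v x) = ((b - a) - (b - a)) @\<^sub>v ((b - a) - (b - a))" by simp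
  also have "\<dots> = 0\<^sub>v (2*p)" using ac by (intro eq_vecI) auto
  finally show ?thesis .
qed

lemma mat_vec_zero: "A \<in> carrier_mat nr nc \<Longrightarrow> A *\<^sub>v 0\<^sub>v nc = (0\<^sub>v nr :: real vec)"
  by (intro eq_vecI) (auto simp: scalar_prod_def)

lemma part_c: assumes p: "0 < p" shows "\<exists>L'. L' \<in> carrier_mat (2*p) p \<and> rho (Abar p - L' * Cbar p) < 1"
proof (intro exI conjI)
  show "Lgain p \<in> carrier_mat (2*p) p" by simp
  let ?M = "Abar p - Lgain p * Cbar p"
  have Mc: "?M \<in> carrier_mat (2*p) (2*p)"
    by (rule minus_carrier_mat) (rule mult_carrier_mat[OF Lgain_carrier Cbar_carrier])
  show "rho ?M < 1"
  proof (rule rho_lt1_of_decay[OF Mc])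
    show "0 < 2*p" using p by simp
    fix a :: "real vec" assume a: "a \<in> carrier_vec (2*p)"
    have "?M ^\<^sub>m Suc (Suc k) *\<^sub>v a = 0\<^sub>v (2*p)" for k
    proof -
      have "?M ^\<^sub>m Suc (Suc k) *\<^sub>v a = ?M ^\<^sub>m k *\<^sub>v (?M *\<^sub>v (?M *\<^sub>v a))"
      proof -
        have Mk: "?M ^\<^sub>m k \<in> carrier_mat (2*p) (2*p)" using Mc by simp
        have Mk1: "?M ^\<^sub>m k * ?M \<in> carrier_mat (2*p) (2*p)" by (rule mult_carrier_mat[OF Mk Mc])
        have "?M ^\<^sub>m Suc (Suc k) *\<^sub>v a = (?M ^\<^sub>m k * ?M) *\<^sub>v (?M *\<^sub>v a)"
          using assoc_mult_mat_vec[OF Mk1 Mc a] by simp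
        also have "\<dots> = ?M ^\<^sub>m k *\<^sub>v (?M *\<^sub>v (?M *\<^sub>v a))"
          using assoc_mult_mat_vec[OF Mk Mc mult_mat_vec_carrier[OF Mc a]] by simp
        finally show ?thesis .
      qed
      also have "\<dots> = 0\<^sub>v (2*p)" unfolding Mgain_sq[OF a] by (rule mat_vec_zero) (use Mc in simp)
      finally show ?thesis .
    qed
    then have "\<forall>\<^sub>F k in sequentially. vnorm (?M ^\<^sub>m k *\<^sub>v a) = 0"
      by (intro eventually_sequentiallyI[of 2]) (metis Suc_1 add_2_eq_Suc le_Suc_ex vnorm_zero)
    then show "(\<lambda>k. vnorm (?M ^\<^sub>m k *\<^sub>v a)) \<longlonglongrightarrow> 0" by (rule tendsto_eventually)
  qed
qed


context sys
begin

lemma d_bound: assumes B: "\<And>k. vnorm (N k) \<le> B" shows "vnorm (dlt (dlt N) k) \<le> 4 * B"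
proof -
  have e: "dlt (dlt N) k = (N (Suc (Suc k)) - N (Suc k)) - (N (Suc k) - N k)" by (simp add: dlt_def)
  have dN: "\<And>k. dim_vec (N k) = p" using N by (simp add: carrier_vecD)
  have d1: "vnorm (N (Suc (Suc k)) - N (Suc k)) \<le> B + B"
    using vnorm_minus[of "N (Suc (Suc k))" "N (Suc k)"] dN B[of "Suc (Suc k)"] B[of "Suc k"] by simp
  have d2: "vnorm (N (Suc k) - N k) \<le> B + B"
    using vnorm_minus[of "N (Suc k)" "N k"] dN B[of "Suc k"] B[of k] by simp
  have "vnorm (dlt (dlt N) k) \<le> vnorm (N (Suc (Suc k)) - N (Suc k)) + vnorm (N (Suc k) - N k)"
    unfolding e by (rule vnorm_minus) (use dN in simp)
  then show ?thesis using d1 d2 by linarith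
qed

lemma w_bound: "vnorm (- ((Fmat p)\<^sup>T *\<^sub>v dlt (dlt N) k)) \<le> real (2*p) * vnorm (dlt (dlt N) k)"
proof -
  let ?d = "dlt (dlt N) k"
  have dd: "dim_vec ?d = p" using d2_c[of k] by auto
  have "vnorm (- ((Fmat p)\<^sup>T *\<^sub>v ?d)) = vnorm (0\<^sub>v p @\<^sub>v ?d)" by (simp add: Fmat_T[OF d2_c])
  also have "\<dots> \<le> dim_vec (0\<^sub>v p @\<^sub>v ?d) * vnorm ?d"
  proof (rule vnorm_le_bound)
    fix i assume i: "i < dim_vec (0\<^sub>v p @\<^sub>v ?d)"
    show "\<bar>(0\<^sub>v p @\<^sub>v ?d) $ i\<bar> \<le> vnorm ?d"
    proof (cases "i < p")
      case True then show ?thesis using i dd by simp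
    next
      case False
      have i2: "i < p + p" using i dd by simp
      have ip: "i - p < dim_vec ?d" unfolding dd using False i2 by linarith
      have "(0\<^sub>v p @\<^sub>v ?d) $ i = (if i < dim_vec (0\<^sub>v p :: real vec) then 0\<^sub>v p $ i else ?d $ (i - dim_vec (0\<^sub>v p :: real vec)))"
        by (rule index_append_vec(1)) (unfold dd index_zero_vec(2), use i2 in simp)
      then have "(0\<^sub>v p @\<^sub>v ?d) $ i = ?d $ (i - p)" using False by simp
      then show ?thesis using vnorm_comp[OF ip] by simp
    qed
  qed
  finally show ?thesis using dd by simp
qed

lemma fwd_bound:
  fixes K \<mu> B :: real
  assumes B: "\<And>k. vnorm (N k) \<le> B"
    and \<mu>: "0 < \<mu>" "\<mu> < 1" and K: "0 < K"
    and pb: "\<And>k x. x \<in> carrier_vec (2*p) \<Longrightarrow> vnorm ((Abar p - L * Cbar p) ^\<^sub>m k *\<^sub>v x) \<le> K * \<mu>^k * vnorm x"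
  shows "(\<exists>\<beta>0\<ge>0. \<forall>k. vnorm (Xtil P Yd L U N x0 k) \<le> (K * real (2*p) / (1 - \<mu>)) * beta_d2N N + \<beta>0 * \<mu>^k)
    \<and> limsup (\<lambda>k. ereal (vnorm (Xtil P Yd L U N x0 k))) \<le> ereal ((K * real (2*p) / (1 - \<mu>)) * beta_ess_d2N N)"
proof -
  let ?M = "Abar p - L * Cbar p"
  define A where "A = K * real (2*p) / (1 - \<mu>)"
  have A0: "0 \<le> A" unfolding A_def using K \<mu> by simp
  define X where "X = Xtil P Yd L U N x0"
  define d where "d = dlt (dlt N)"
  define w where "w = (\<lambda>k. - ((Fmat p)\<^sup>T *\<^sub>v d k))"
  have Xc: "\<And>k. X k \<in> carrier_vec (2*p)" unfolding X_def by simp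
  have wc: "\<And>k. w k \<in> carrier_vec (2*p)" unfolding w_def by simp
  have step: "\<And>k. X (Suc k) = ?M *\<^sub>v X k + w k"
  proof -
    fix k
    have "?M *\<^sub>v X k \<in> carrier_vec (2*p)" by (rule mult_mat_vec_carrier[OF M_c Xc])
    then show "X (Suc k) = ?M *\<^sub>v X k + w k"
      unfolding X_def Xtil_step w_def d_def using FT_v_c[of p "dlt (dlt N) k"]
      by (intro eq_vecI) (auto simp: X_def)
  qed
  have wb: "\<And>k. vnorm (w k) \<le> real (2*p) * vnorm (d k)" unfolding w_def d_def by (rule w_bound)
  have db: "\<And>k. vnorm (d k) \<le> 4 * B" unfolding d_def by (rule d_bound[OF B])
  have bdd: "bdd_above (range (\<lambda>k. vnorm (d k)))" using db by (intro bdd_aboveI2) auto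
  have dbeta: "\<And>k. vnorm (d k) \<le> beta_d2N N"
    unfolding beta_d2N_def d_def[symmetric] by (rule cSUP_upper[OF UNIV_I bdd])
  have part1: "\<exists>\<beta>0\<ge>0. \<forall>k. vnorm (X k) \<le> A * beta_d2N N + \<beta>0 * \<mu>^k"
  proof (intro exI conjI allI)
    show "0 \<le> K * vnorm (X 0)" using K by simp
    fix k
    have "vnorm (X (0 + k)) \<le> K * \<mu>^k * vnorm (X 0) + K * (real (2*p) * beta_d2N N) / (1 - \<mu>)"
    proof (rule forced_bound[where M="?M" and X=X and w=w and K=K and \<mu>=\<mu>, OF M_c Xc wc step pb \<mu>])
      show "0 \<le> K" using K by simp
      fix j :: nat
      have "vnorm (w j) \<le> real (2*p) * vnorm (d j)" by (rule wb)
      also have "\<dots> \<le> real (2*p) * beta_d2N N" by (intro mult_left_mono dbeta) auto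
      finally show "vnorm (w j) \<le> real (2*p) * beta_d2N N" .
    qed
    also have "\<dots> = A * beta_d2N N + K * vnorm (X 0) * \<mu>^k" unfolding A_def by (simp add: field_simps)
    finally show "vnorm (X k) \<le> A * beta_d2N N + K * vnorm (X 0) * \<mu>^k" by simp
  qed
  define f where "f = (\<lambda>k. ereal (vnorm (d k)))"
  have lsf: "limsup f = ereal (beta_ess_d2N N)"
  proof -
    have up: "limsup f \<le> ereal (4 * B)" unfolding f_def using db by (intro Limsup_bounded) auto
    have lo: "0 \<le> limsup f" unfolding f_def by (intro le_Limsup) auto
    from up lo show ?thesis unfolding beta_ess_d2N_def f_def[symmetric] d_def[symmetric]
      by (cases "limsup f") auto
  qed
  have part2: "limsup (\<lambda>k. ereal (vnorm (X k))) \<le> ereal (A * beta_ess_d2N N)"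
  proof (rule ereal_le_epsilon2)
    fix e :: real assume e: "0 < e"
    define \<epsilon> where "\<epsilon> = e / (1 + A)"
    have \<epsilon>: "0 < \<epsilon>" unfolding \<epsilon>_def using e A0 by simp
    let ?ess = "beta_ess_d2N N"
    have "eventually (\<lambda>k. f k < ereal (?ess + \<epsilon>)) sequentially"
      by (rule Limsup_lessD) (use lsf \<epsilon> in simp)
    then obtain k0 where k0: "\<And>k. k \<ge> k0 \<Longrightarrow> vnorm (d k) < ?ess + \<epsilon>"
      unfolding f_def eventually_sequentially by auto
    define V0 where "V0 = vnorm (X k0)"
    have fb: "vnorm (X (k0 + j)) \<le> K * \<mu>^j * V0 + K * (real (2*p) * (?ess + \<epsilon>)) / (1 - \<mu>)" for j
      unfolding V0_def
    proof (rule forced_bound[where M="?M" and X=X and w=w and K=K and \<mu>=\<mu>, OF M_c Xc wc step pb \<mu>])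
      show "0 \<le> K" using K by simp
      fix i :: nat assume i: "k0 \<le> i"
      have "vnorm (w i) \<le> real (2*p) * vnorm (d i)" by (rule wb)
      also have "\<dots> \<le> real (2*p) * (?ess + \<epsilon>)" using k0[OF i] by (intro mult_left_mono) auto
      finally show "vnorm (w i) \<le> real (2*p) * (?ess + \<epsilon>)" .
    qed
    have "(\<lambda>j. K * \<mu>^j * V0) \<longlonglongrightarrow> K * 0 * V0"
      by (intro tendsto_intros LIMSEQ_power_zero) (use \<mu> in auto)
    then have "eventually (\<lambda>j. K * \<mu>^j * V0 < \<epsilon>) sequentially"
      using \<epsilon> by (intro order_tendstoD(2)) auto
    then obtain j1 where j1: "\<And>j. j \<ge> j1 \<Longrightarrow> K * \<mu>^j * V0 < \<epsilon>"
      unfolding eventually_sequentially by auto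
    have "eventually (\<lambda>k. ereal (vnorm (X k)) \<le> ereal (A * ?ess + e)) sequentially"
    proof (rule eventually_sequentiallyI[of "k0 + j1"])
      fix k assume k: "k0 + j1 \<le> k"
      define j where "j = k - k0"
      have kj: "k = k0 + j" and j: "j \<ge> j1" using k unfolding j_def by auto
      have "vnorm (X k) \<le> K * \<mu>^j * V0 + K * (real (2*p) * (?ess + \<epsilon>)) / (1 - \<mu>)" unfolding kj by (rule fb)
      also have "\<dots> \<le> \<epsilon> + A * (?ess + \<epsilon>)"
      proof -
        have "K * (real (2*p) * (?ess + \<epsilon>)) / (1 - \<mu>) = A * (?ess + \<epsilon>)" unfolding A_def by simp
        then show ?thesis using j1[OF j] by linarith
      qed
      also have "\<dots> = A * ?ess + \<epsilon> * (1 + A)" by (simp add: algebra_simps)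
      also have "\<epsilon> * (1 + A) = e" unfolding \<epsilon>_def using A0 by simp
      finally show "ereal (vnorm (X k)) \<le> ereal (A * ?ess + e)" by simp
    qed
    then have "limsup (\<lambda>k. ereal (vnorm (X k))) \<le> ereal (A * ?ess + e)" by (rule Limsup_bounded)
    then show "limsup (\<lambda>k. ereal (vnorm (X k))) \<le> ereal (A * ?ess) + ereal e" by simp
  qed
  show ?thesis using part1 part2 unfolding X_def A_def by blast
qed

end


lemma part_b_conv:
  fixes p m :: nat and P L :: "real mat" and Yd :: "real vec"
  assumes p: "0 < p" and P: "P \<in> carrier_mat p m" and Yd: "Yd \<in> carrier_vec p"
    and L: "L \<in> carrier_mat (2*p) p"
    and K1: "class_Kinf \<chi>1" and KL: "class_KL \<zeta>"
    and H: "\<forall>U N x0. (\<forall>k. U k \<in> carrier_vec m) \<and> (\<forall>k. N k \<in> carrier_vec p) \<and> x0 \<in> carrier_vec (2*p)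
          \<and> (\<exists>B. \<forall>k. vnorm (N k) \<le> B) \<longrightarrow>
        (\<exists>\<beta>0\<ge>0. \<forall>k. vnorm (Xtil P Yd L U N x0 k) \<le> \<chi>1 (beta_d2N N) + \<zeta> \<beta>0 k) \<and>
        limsup (\<lambda>k. ereal (vnorm (Xtil P Yd L U N x0 k))) \<le> ereal (\<chi>2 (beta_ess_d2N N))"
  shows "rho (Abar p - L * Cbar p) < 1"
proof -
  let ?M = "Abar p - L * Cbar p"
  have Mc: "?M \<in> carrier_mat (2*p) (2*p)"
    by (rule minus_carrier_mat) (rule mult_carrier_mat[OF L Cbar_carrier])
  show ?thesis
  proof (rule rho_lt1_of_decay[OF Mc])
    show "0 < 2*p" using p by simp
    fix a :: "real vec" assume a: "a \<in> carrier_vec (2*p)"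
    define U0 :: "nat \<Rightarrow> real vec" where "U0 = (\<lambda>k. 0\<^sub>v m)"
    define N0 :: "nat \<Rightarrow> real vec" where "N0 = (\<lambda>k. 0\<^sub>v p)"
    interpret T: sys p m P L Yd U0 N0 "0\<^sub>v (2*p)"
      by unfold_locales (use P Yd L in \<open>auto simp: U0_def N0_def\<close>)
    define x0 where "x0 = Xbar P Yd U0 N0 0 - a"
    have x0c: "x0 \<in> carrier_vec (2*p)" unfolding x0_def using a by simp
    interpret S: sys p m P L Yd U0 N0 x0
      by unfold_locales (use P Yd L x0c in \<open>auto simp: U0_def N0_def\<close>)
    have d0: "dlt (dlt N0) k = 0\<^sub>v p" for k by (intro eq_vecI) (auto simp: dlt_def N0_def)
    have FT0: "(Fmat p)\<^sup>T *\<^sub>v 0\<^sub>v p = 0\<^sub>v (2*p)"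
      by (rule mat_vec_zero) (use Fmat_carrier[of p] in auto)
    have X0: "Xtil P Yd L U0 N0 x0 0 = a"
      unfolding Xtil_def eso.simps x0_def using a S.Xbar_c[of 0] by (intro eq_vecI) auto
    have Xk: "Xtil P Yd L U0 N0 x0 k = ?M ^\<^sub>m k *\<^sub>v a" for k
    proof (induction k)
      case 0 
      have "dim_row L = 2*p" using L by simp
      then show ?case using X0 a by simp
    next
      case (Suc k)
      have "Xtil P Yd L U0 N0 x0 (Suc k) = ?M *\<^sub>v (?M ^\<^sub>m k *\<^sub>v a) - 0\<^sub>v (2*p)"
        unfolding S.Xtil_step d0 FT0 Suc ..
      also have "\<dots> = ?M *\<^sub>v (?M ^\<^sub>m k *\<^sub>v a)"
        using mult_mat_vec_carrier[OF Mc mult_mat_vec_carrier[OF pow_carrier_mat[OF Mc] a]]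
        by (intro eq_vecI) auto
      also have "\<dots> = ?M ^\<^sub>m Suc k *\<^sub>v a" by (rule pow_mult_vec_Suc[OF Mc a, symmetric])
      finally show ?case .
    qed
    have beta0: "beta_d2N N0 = 0" unfolding beta_d2N_def d0 by simp
    have "(\<exists>\<beta>0\<ge>0. \<forall>k. vnorm (Xtil P Yd L U0 N0 x0 k) \<le> \<chi>1 (beta_d2N N0) + \<zeta> \<beta>0 k)"
      using H[rule_format, of U0 N0 x0] x0c by (auto simp: U0_def N0_def)
    then obtain \<beta>0 where b0: "\<beta>0 \<ge> 0" and bk: "\<And>k. vnorm (Xtil P Yd L U0 N0 x0 k) \<le> \<chi>1 0 + \<zeta> \<beta>0 k"
      unfolding beta0 by auto
    have c0: "\<chi>1 0 = 0" using K1 unfolding class_Kinf_def class_K_def by auto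
    have zl: "(\<lambda>k. \<zeta> \<beta>0 k) \<longlonglongrightarrow> 0" using KL b0 unfolding class_KL_def by auto
    show "(\<lambda>k. vnorm (?M ^\<^sub>m k *\<^sub>v a)) \<longlonglongrightarrow> 0"
    proof (rule tendsto_sandwich[OF _ _ tendsto_const zl])
      show "\<forall>\<^sub>F k in sequentially. 0 \<le> vnorm (?M ^\<^sub>m k *\<^sub>v a)" by simp
      show "\<forall>\<^sub>F k in sequentially. vnorm (?M ^\<^sub>m k *\<^sub>v a) \<le> \<zeta> \<beta>0 k"
        using bk c0 by (simp add: Xk)
    qed
  qed
qed

lemma lin_Kinf: fixes A :: real assumes A: "0 < A" shows "class_Kinf (\<lambda>s. A * s)"
  unfolding class_Kinf_def class_K_def
proof (intro conjI)
  show "continuous_on {0..} (\<lambda>s. A * s)" by (intro continuous_intros)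
  show "A * 0 = 0" by simp
  show "strict_mono_on {0..} (\<lambda>s. A * s)" using A by (intro strict_mono_onI) simp
  show "filterlim (\<lambda>s. A * s) at_top at_top"
    by (rule filterlim_tendsto_pos_mult_at_top[OF tendsto_const A filterlim_ident])
qed

lemma geo_KL: fixes \<mu> :: real assumes \<mu>: "0 < \<mu>" "\<mu> < 1" shows "class_KL (\<lambda>s k. s * \<mu>^k)"
  unfolding class_KL_def class_K_def
proof (intro conjI allI impI)
  fix k :: nat
  show "continuous_on {0..} (\<lambda>s. s * \<mu>^k)" by (intro continuous_intros)
  show "0 * \<mu>^k = 0" by simp
  show "strict_mono_on {0..} (\<lambda>s. s * \<mu>^k)" using \<mu> by (intro strict_mono_onI) simp
next
  fix s :: real assume s: "0 \<le> s"
  show "antimono (\<lambda>k. s * \<mu>^k)"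
    by (intro antimonoI mult_left_mono power_decreasing) (use s \<mu> in auto)
  have "(\<lambda>k. s * \<mu>^k) \<longlonglongrightarrow> s * 0" by (intro tendsto_intros LIMSEQ_power_zero) (use \<mu> in auto)
  then show "(\<lambda>k. s * \<mu>^k) \<longlonglongrightarrow> 0" by simp
qed

lemma part_b_fwd:
  fixes p m :: nat and P L :: "real mat" and Yd :: "real vec"
  assumes p: "0 < p" and P: "P \<in> carrier_mat p m" and Yd: "Yd \<in> carrier_vec p"
    and L: "L \<in> carrier_mat (2*p) p" and r: "rho (Abar p - L * Cbar p) < 1"
  shows "\<exists>\<chi>1 \<zeta> \<chi>2. class_Kinf \<chi>1 \<and> class_KL \<zeta> \<and> class_Kinf \<chi>2 \<and>
      (\<forall>U N x0. (\<forall>k. U k \<in> carrier_vec m) \<and> (\<forall>k. N k \<in> carrier_vec p) \<and> x0 \<in> carrier_vec (2*p)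
          \<and> (\<exists>B. \<forall>k. vnorm (N k) \<le> B) \<longrightarrow>
        (\<exists>\<beta>0\<ge>0. \<forall>k. vnorm (Xtil P Yd L U N x0 k) \<le> \<chi>1 (beta_d2N N) + \<zeta> \<beta>0 k) \<and>
        limsup (\<lambda>k. ereal (vnorm (Xtil P Yd L U N x0 k))) \<le> ereal (\<chi>2 (beta_ess_d2N N)))"
proof -
  let ?M = "Abar p - L * Cbar p"
  have Mc: "?M \<in> carrier_mat (2*p) (2*p)"
    by (rule minus_carrier_mat) (rule mult_carrier_mat[OF L Cbar_carrier])
  have n: "0 < 2*p" using p by simp
  obtain c \<mu> where \<mu>: "0 < \<mu>" "\<mu> < 1" and c: "0 < c"
    and cb: "\<And>k i j. i < 2*p \<Longrightarrow> j < 2*p \<Longrightarrow> \<bar>(?M ^\<^sub>m k) $$ (i,j)\<bar> \<le> c * \<mu>^k"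
    using pow_bound[OF Mc n r] by blast
  define K where "K = real (2*p) * real (2*p) * c"
  have K: "0 < K" unfolding K_def using c p by simp
  have pb: "vnorm (?M ^\<^sub>m k *\<^sub>v x) \<le> K * \<mu>^k * vnorm x" if x: "x \<in> carrier_vec (2*p)" for k x
  proof -
    have "vnorm (?M ^\<^sub>m k *\<^sub>v x) \<le> (real (2*p) * real (2*p) * (c * \<mu>^k)) * vnorm x"
      by (rule vnorm_mat[OF pow_carrier_mat[OF Mc] x]) (rule cb)
    then show ?thesis unfolding K_def by (simp add: mult.assoc)
  qed
  define A where "A = K * real (2*p) / (1 - \<mu>)"
  have A: "0 < A" unfolding A_def using K \<mu> p by simp
  have Hall: "\<forall>U N x0. (\<forall>k. U k \<in> carrier_vec m) \<and> (\<forall>k. N k \<in> carrier_vec p) \<and> x0 \<in> carrier_vec (2*p)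
          \<and> (\<exists>B. \<forall>k. vnorm (N k) \<le> B) \<longrightarrow>
        (\<exists>\<beta>0\<ge>0. \<forall>k. vnorm (Xtil P Yd L U N x0 k) \<le> A * beta_d2N N + \<beta>0 * \<mu>^k) \<and>
        limsup (\<lambda>k. ereal (vnorm (Xtil P Yd L U N x0 k))) \<le> ereal (A * beta_ess_d2N N)"
  proof (intro allI impI)
    fix U N :: "nat \<Rightarrow> real vec" and x0 :: "real vec"
    assume H: "(\<forall>k. U k \<in> carrier_vec m) \<and> (\<forall>k. N k \<in> carrier_vec p) \<and> x0 \<in> carrier_vec (2*p)
          \<and> (\<exists>B. \<forall>k. vnorm (N k) \<le> B)"
    then obtain B where B: "\<And>k. vnorm (N k) \<le> B" by auto
    interpret sys p m P L Yd U N x0 using H P Yd L by unfold_locales auto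
    from fwd_bound[OF B \<mu> K pb]
    show "(\<exists>\<beta>0\<ge>0. \<forall>k. vnorm (Xtil P Yd L U N x0 k) \<le> A * beta_d2N N + \<beta>0 * \<mu>^k) \<and>
        limsup (\<lambda>k. ereal (vnorm (Xtil P Yd L U N x0 k))) \<le> ereal (A * beta_ess_d2N N)"
      unfolding A_def by blast
  qed
  show ?thesis
    apply (rule exI[of _ "\<lambda>s. A * s"], rule exI[of _ "\<lambda>s k. s * \<mu>^k"], rule exI[of _ "\<lambda>s. A * s"])
    using lin_Kinf[OF A] geo_KL[OF \<mu>] Hall by simp
qed

theorem lemma3:
  fixes p m :: nat and P L :: "real mat" and Yd :: "real vec"
  assumes "0 < p" and "P \<in> carrier_mat p m" and "Yd \<in> carrier_vec p"
    and "L \<in> carrier_mat (2*p) p"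
  shows
  "(\<forall>U N x0. (\<forall>k. U k \<in> carrier_vec m) \<and> (\<forall>k. N k \<in> carrier_vec p) \<and> x0 \<in> carrier_vec (2*p) \<longrightarrow>
      (\<forall>k. eso P Yd L U N x0 (Suc k) =
             (Abar p - L * Cbar p) *\<^sub>v eso P Yd L U N x0 k + Bbar P *\<^sub>v Ubar U k + L *\<^sub>v Err P Yd U N k) \<and>
      (\<forall>k. Xtil P Yd L U N x0 (Suc k) =
             (Abar p - L * Cbar p) *\<^sub>v Xtil P Yd L U N x0 k - (Fmat p)\<^sup>T *\<^sub>v dlt (dlt N) k))
   \<and>
   ((\<exists>\<chi>1 \<zeta> \<chi>2. class_Kinf \<chi>1 \<and> class_KL \<zeta> \<and> class_Kinf \<chi>2 \<and>
      (\<forall>U N x0. (\<forall>k. U k \<in> carrier_vec m) \<and> (\<forall>k. N k \<in> carrier_vec p) \<and> x0 \<in> carrier_vec (2*p)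
          \<and> (\<exists>B. \<forall>k. vnorm (N k) \<le> B) \<longrightarrow>
        (\<exists>\<beta>0\<ge>0. \<forall>k. vnorm (Xtil P Yd L U N x0 k) \<le> \<chi>1 (beta_d2N N) + \<zeta> \<beta>0 k) \<and>
        limsup (\<lambda>k. ereal (vnorm (Xtil P Yd L U N x0 k))) \<le> ereal (\<chi>2 (beta_ess_d2N N))))
    \<longleftrightarrow> rho (Abar p - L * Cbar p) < 1)
   \<and>
   (\<exists>L'. L' \<in> carrier_mat (2*p) p \<and> rho (Abar p - L' * Cbar p) < 1)"
proof (intro conjI)
  show "\<forall>U N x0. (\<forall>k. U k \<in> carrier_vec m) \<and> (\<forall>k. N k \<in> carrier_vec p) \<and> x0 \<in> carrier_vec (2*p) \<longrightarrow>
      (\<forall>k. eso P Yd L U N x0 (Suc k) =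
             (Abar p - L * Cbar p) *\<^sub>v eso P Yd L U N x0 k + Bbar P *\<^sub>v Ubar U k + L *\<^sub>v Err P Yd U N k) \<and>
      (\<forall>k. Xtil P Yd L U N x0 (Suc k) =
             (Abar p - L * Cbar p) *\<^sub>v Xtil P Yd L U N x0 k - (Fmat p)\<^sup>T *\<^sub>v dlt (dlt N) k)"
  proof (intro allI impI)
    fix U N :: "nat \<Rightarrow> real vec" and x0 :: "real vec"
    assume H: "(\<forall>k. U k \<in> carrier_vec m) \<and> (\<forall>k. N k \<in> carrier_vec p) \<and> x0 \<in> carrier_vec (2*p)"
    interpret sys p m P L Yd U N x0 using H assms by unfold_locales auto
    show "(\<forall>k. eso P Yd L U N x0 (Suc k) =
             (Abar p - L * Cbar p) *\<^sub>v eso P Yd L U N x0 k + Bbar P *\<^sub>v Ubar U k + L *\<^sub>v Err P Yd U N k) \<and>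
      (\<forall>k. Xtil P Yd L U N x0 (Suc k) =
             (Abar p - L * Cbar p) *\<^sub>v Xtil P Yd L U N x0 k - (Fmat p)\<^sup>T *\<^sub>v dlt (dlt N) k)"
      using eso_step Xtil_step by blast
  qed
next
  show "(\<exists>\<chi>1 \<zeta> \<chi>2. class_Kinf \<chi>1 \<and> class_KL \<zeta> \<and> class_Kinf \<chi>2 \<and>
      (\<forall>U N x0. (\<forall>k. U k \<in> carrier_vec m) \<and> (\<forall>k. N k \<in> carrier_vec p) \<and> x0 \<in> carrier_vec (2*p)
          \<and> (\<exists>B. \<forall>k. vnorm (N k) \<le> B) \<longrightarrow>
        (\<exists>\<beta>0\<ge>0. \<forall>k. vnorm (Xtil P Yd L U N x0 k) \<le> \<chi>1 (beta_d2N N) + \<zeta> \<beta>0 k) \<and>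
        limsup (\<lambda>k. ereal (vnorm (Xtil P Yd L U N x0 k))) \<le> ereal (\<chi>2 (beta_ess_d2N N))))
    \<longleftrightarrow> rho (Abar p - L * Cbar p) < 1"
  proof
    assume "\<exists>\<chi>1 \<zeta> \<chi>2. class_Kinf \<chi>1 \<and> class_KL \<zeta> \<and> class_Kinf \<chi>2 \<and>
      (\<forall>U N x0. (\<forall>k. U k \<in> carrier_vec m) \<and> (\<forall>k. N k \<in> carrier_vec p) \<and> x0 \<in> carrier_vec (2*p)
          \<and> (\<exists>B. \<forall>k. vnorm (N k) \<le> B) \<longrightarrow>
        (\<exists>\<beta>0\<ge>0. \<forall>k. vnorm (Xtil P Yd L U N x0 k) \<le> \<chi>1 (beta_d2N N) + \<zeta> \<beta>0 k) \<and>
        limsup (\<lambda>k. ereal (vnorm (Xtil P Yd L U N x0 k))) \<le> ereal (\<chi>2 (beta_ess_d2N N)))"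
    then obtain \<chi>1 \<zeta> \<chi>2 where K1: "class_Kinf \<chi>1" and KL: "class_KL \<zeta>"
      and H: "\<forall>U N x0. (\<forall>k. U k \<in> carrier_vec m) \<and> (\<forall>k. N k \<in> carrier_vec p) \<and> x0 \<in> carrier_vec (2*p)
          \<and> (\<exists>B. \<forall>k. vnorm (N k) \<le> B) \<longrightarrow>
        (\<exists>\<beta>0\<ge>0. \<forall>k. vnorm (Xtil P Yd L U N x0 k) \<le> \<chi>1 (beta_d2N N) + \<zeta> \<beta>0 k) \<and>
        limsup (\<lambda>k. ereal (vnorm (Xtil P Yd L U N x0 k))) \<le> ereal (\<chi>2 (beta_ess_d2N N))"
      by blast
    show "rho (Abar p - L * Cbar p) < 1" by (rule part_b_conv[OF assms K1 KL H])
  next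
    assume "rho (Abar p - L * Cbar p) < 1"
    then show "\<exists>\<chi>1 \<zeta> \<chi>2. class_Kinf \<chi>1 \<and> class_KL \<zeta> \<and> class_Kinf \<chi>2 \<and>
      (\<forall>U N x0. (\<forall>k. U k \<in> carrier_vec m) \<and> (\<forall>k. N k \<in> carrier_vec p) \<and> x0 \<in> carrier_vec (2*p)
          \<and> (\<exists>B. \<forall>k. vnorm (N k) \<le> B) \<longrightarrow>
        (\<exists>\<beta>0\<ge>0. \<forall>k. vnorm (Xtil P Yd L U N x0 k) \<le> \<chi>1 (beta_d2N N) + \<zeta> \<beta>0 k) \<and>
        limsup (\<lambda>k. ereal (vnorm (Xtil P Yd L U N x0 k))) \<le> ereal (\<chi>2 (beta_ess_d2N N)))"
      by (rule part_b_fwd[OF assms])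
  qed
next
  show "\<exists>L'. L' \<in> carrier_mat (2*p) p \<and> rho (Abar p - L' * Cbar p) < 1" by (rule part_c[OF assms(1)])
qed

end
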